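(* Let $\mathcal{A}=\{A_1,\dots,A_m\}$ be a bimodal collection of pairwise disjoint nonempty subsets of a finite abelian group $G$, with internal difference groups $H_1,\dots,H_m$, labelled so that $|A_i|<|H_i|$ exactly for $i=1,\dots,r$, where $r\ge2$. Let $D=(a_1+H_1)\setminus A_1$, where $a_1+H_1$ is the coset of $H_1$ containing $A_1$, and suppose $\mathcal{A}$ is in canonical position, i.e. $D$ is a subgroup of $G$. Then for every $i\ge r+1$, $H_i$ is a subgroup of $D$.
   Context: $G$ is written additively. The internal difference group $H_i$ of $A_i$ is the subgroup generated by all $x-y$ with $x,y\in A_i$; $A_i$ lies in a single coset of $H_i$ and $|A_i|\le|H_i|$. A collection $\{A_1,\dots,A_m\}$ of pairwise disjoint subsets of $G$ is bimodal if for every $i$ and every $\delta\in G\setminus\{0\}$, the number $N_i(\delta)$ of pairs $(a,b)$ with $a\in A_i$, $b\in A_j$ for some $j\neq i$, and $a-b=\delta$, satisfies $N_i(\delta)\in\{0,|A_i|\}$. (For such collections with $r\ge2$ the set $D$ equals $(a_i+H_i)\setminus A_i$ for every $i\le r$ and is a coset of a subgroup; canonical position means the collection has been translated so that $D$ is a subgroup.) *)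

theory Defs
  imports Main
begin

definition add_subgroup :: "'a::ab_group_add set \<Rightarrow> bool" where
  "add_subgroup S \<longleftrightarrow> 0 \<in> S \<and> (\<forall>x\<in>S. \<forall>y\<in>S. x + y \<in> S) \<and> (\<forall>x\<in>S. - x \<in> S)"

definition diff_group :: "'a::ab_group_add set \<Rightarrow> 'a set" where
  "diff_group A = \<Inter>{S. add_subgroup S \<and> {x - y | x y. x \<in> A \<and> y \<in> A} \<subseteq> S}"

definition N_count :: "(nat \<Rightarrow> 'a::ab_group_add set) \<Rightarrow> nat \<Rightarrow> nat \<Rightarrow> 'a \<Rightarrow> nat" where
  "N_count A m i \<delta> = card {(a, b). a \<in> A i \<and> (\<exists>j\<in>{1..m}. j \<noteq> i \<and> b \<in> A j) \<and> a - b = \<delta>}"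

definition bimodal :: "(nat \<Rightarrow> 'a::ab_group_add set) \<Rightarrow> nat \<Rightarrow> bool" where
  "bimodal A m \<longleftrightarrow> (\<forall>i\<in>{1..m}. \<forall>\<delta>. \<delta> \<noteq> 0 \<longrightarrow> N_count A m i \<delta> \<in> {0, card (A i)})"

end

theory Submission
  imports Defs
begin

lemma dg_sub: "add_subgroup (diff_group B)"
  unfolding diff_group_def add_subgroup_def by blast

lemma dg_gen: "x \<in> B \<Longrightarrow> y \<in> B \<Longrightarrow> x - y \<in> diff_group B"
  unfolding diff_group_def by blast

lemma dg_least: "add_subgroup T \<Longrightarrow> (\<And>x y. x \<in> B \<Longrightarrow> y \<in> B \<Longrightarrow> x - y \<in> T) \<Longrightarrow> diff_group B \<subseteq> T"
  unfolding diff_group_def by blast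

lemma sg_add: "add_subgroup S \<Longrightarrow> x \<in> S \<Longrightarrow> y \<in> S \<Longrightarrow> x + y \<in> S"
  unfolding add_subgroup_def by blast
lemma sg_neg: "add_subgroup S \<Longrightarrow> x \<in> S \<Longrightarrow> - x \<in> S"
  unfolding add_subgroup_def by blast
lemma sg_zero: "add_subgroup S \<Longrightarrow> 0 \<in> S"
  unfolding add_subgroup_def by blast
lemma sg_diff: "add_subgroup S \<Longrightarrow> x \<in> S \<Longrightarrow> y \<in> S \<Longrightarrow> x - y \<in> S"
  using sg_add[of S x "-y"] sg_neg[of S y] by simp

lemma key:
  fixes A :: "nat \<Rightarrow> 'a::{ab_group_add, finite} set"
  assumes disj: "\<forall>i\<in>{1..m}. \<forall>j\<in>{1..m}. i \<noteq> j \<longrightarrow> A i \<inter> A j = {}"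
    and bim: "bimodal A m" and i: "i \<in> {1..m}"
    and x: "x \<in> A i" and y: "y \<in> A i"
    and u: "u \<in> {b. \<exists>j\<in>{1..m}. j \<noteq> i \<and> b \<in> A j}"
  shows "u + (x - y) \<in> {b. \<exists>j\<in>{1..m}. j \<noteq> i \<and> b \<in> A j}"
proof -
  define d where "d = y - u"
  define P where "P = {(a, b). a \<in> A i \<and> (\<exists>j\<in>{1..m}. j \<noteq> i \<and> b \<in> A j) \<and> a - b = d}"
  have d0: "d \<noteq> 0"
  proof
    assume "d = 0"
    hence "y = u" unfolding d_def by simp
    from u obtain j where "j \<in> {1..m}" "j \<noteq> i" "u \<in> A j" by blast
    thus False using disj i y \<open>y = u\<close> by blast
  qed
  have yu: "(y, u) \<in> P" using y u unfolding P_def d_def by auto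
  have fin: "finite P" by simp
  have "card P \<noteq> 0" using yu fin by auto
  moreover have "card P \<in> {0, card (A i)}"
    using bim i d0 unfolding bimodal_def N_count_def P_def by blast
  ultimately have cP: "card P = card (A i)" by auto
  have inj: "inj_on fst P" unfolding P_def inj_on_def by auto
  have sub: "fst ` P \<subseteq> A i" unfolding P_def by auto
  have "card (fst ` P) = card (A i)" using card_image[OF inj] cP by simp
  hence "fst ` P = A i" using sub card_subset_eq[of "A i" "fst ` P"] by simp
  then obtain b where "(x, b) \<in> P" using x by force
  hence "b \<in> {b. \<exists>j\<in>{1..m}. j \<noteq> i \<and> b \<in> A j}" and "x - b = d" unfolding P_def by auto
  moreover have "b = u + (x - y)" using \<open>x - b = d\<close> unfolding d_def by (simp add: algebra_simps)
  ultimately show ?thesis by simp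
qed

lemma stab:
  fixes A :: "nat \<Rightarrow> 'a::{ab_group_add, finite} set"
  assumes disj: "\<forall>i\<in>{1..m}. \<forall>j\<in>{1..m}. i \<noteq> j \<longrightarrow> A i \<inter> A j = {}"
    and bim: "bimodal A m" and i: "i \<in> {1..m}"
    and g: "g \<in> diff_group (A i)"
    and u: "u \<in> {b. \<exists>j\<in>{1..m}. j \<noteq> i \<and> b \<in> A j}"
  shows "u + g \<in> {b. \<exists>j\<in>{1..m}. j \<noteq> i \<and> b \<in> A j}"
proof -
  define U where "U = {b. \<exists>j\<in>{1..m}. j \<noteq> i \<and> b \<in> A j}"
  define T where "T = {g. \<forall>u. u \<in> U \<longleftrightarrow> u + g \<in> U}"
  have t1: "x + y \<in> T" if "x \<in> T" "y \<in> T" for x y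
  proof -
    have a: "\<forall>u. u \<in> U \<longleftrightarrow> u + x \<in> U" and b: "\<forall>u. u \<in> U \<longleftrightarrow> u + y \<in> U"
      using that unfolding T_def by auto
    have "u \<in> U \<longleftrightarrow> u + (x + y) \<in> U" for u
      using a[rule_format, of u] b[rule_format, of "u + x"] by (simp only: add.assoc)
    thus ?thesis unfolding T_def by blast
  qed
  have t2: "- x \<in> T" if "x \<in> T" for x
  proof -
    have a: "\<forall>u. u \<in> U \<longleftrightarrow> u + x \<in> U" using that unfolding T_def by auto
    have "u \<in> U \<longleftrightarrow> u + - x \<in> U" for u
    proof -
      have "u + - x + x = u" by simp
      thus ?thesis using a[rule_format, of "u + - x"] by (simp only:)
    qed
    thus ?thesis unfolding T_def by blast
  qed
  have t0: "0 \<in> T" unfolding T_def by simp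
  have "add_subgroup T" unfolding add_subgroup_def using t0 t1 t2 by blast
  moreover have "x - y \<in> T" if "x \<in> A i" "y \<in> A i" for x y
  proof -
    have "u \<in> U \<longleftrightarrow> u + (x - y) \<in> U" for u
    proof
      assume "u \<in> U" thus "u + (x - y) \<in> U"
        using key[OF disj bim i that] unfolding U_def by blast
    next
      assume "u + (x - y) \<in> U"
      hence "(u + (x - y)) + (y - x) \<in> U"
        using key[OF disj bim i that(2) that(1)] unfolding U_def by blast
      thus "u \<in> U" by (simp add: algebra_simps)
    qed
    thus ?thesis unfolding T_def by blast
  qed
  ultimately have "diff_group (A i) \<subseteq> T" by (rule dg_least)
  thus ?thesis using g u unfolding T_def U_def by blast
qed

lemma full_coset:
  fixes B :: "'a::{ab_group_add, finite} set"
  assumes c: "c \<in> B" and cd: "\<not> card B < card (diff_group B)"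
  shows "B = (\<lambda>h. c + h) ` diff_group B"
proof -
  have sub: "B \<subseteq> (\<lambda>h. c + h) ` diff_group B"
  proof
    fix x assume "x \<in> B"
    hence "x - c \<in> diff_group B" using c dg_gen by blast
    thus "x \<in> (\<lambda>h. c + h) ` diff_group B" by (force intro: image_eqI[where x="x - c"])
  qed
  have "card ((\<lambda>h. c + h) ` diff_group B) = card (diff_group B)"
    by (rule card_image) (simp add: inj_on_def)
  moreover have "card B \<le> card ((\<lambda>h. c + h) ` diff_group B)" using card_mono[OF _ sub] by simp
  ultimately have "card B = card ((\<lambda>h. c + h) ` diff_group B)" using cd by linarith
  thus ?thesis using sub card_subset_eq[of "(\<lambda>h. c + h) ` diff_group B" B] by simp
qed

theorem proposition3p8:
  fixes A :: "nat \<Rightarrow> 'a::{ab_group_add, finite} set"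
    and m r :: nat and a1 :: 'a
  assumes disj: "\<forall>i\<in>{1..m}. \<forall>j\<in>{1..m}. i \<noteq> j \<longrightarrow> A i \<inter> A j = {}"
    and nonempty: "\<forall>i\<in>{1..m}. A i \<noteq> {}"
    and bim: "bimodal A m"
    and label: "\<forall>i\<in>{1..m}. (card (A i) < card (diff_group (A i)) \<longleftrightarrow> i \<le> r)"
    and r2: "2 \<le> r" and rm: "r \<le> m"
    and a1: "a1 \<in> A 1"
    and canon: "add_subgroup ((\<lambda>h. a1 + h) ` diff_group (A 1) - A 1)"
  shows "\<forall>i\<in>{r+1..m}. add_subgroup (diff_group (A i)) \<and>
           diff_group (A i) \<subseteq> (\<lambda>h. a1 + h) ` diff_group (A 1) - A 1"
proof
  fix i assume iR: "i \<in> {r+1..m}"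
  define H1 where "H1 = diff_group (A 1)"
  define U1 where "U1 = {b. \<exists>j\<in>{1..m}. j \<noteq> 1 \<and> b \<in> A j}"
  define X where "X = {b. \<exists>j\<in>{1..m}. b \<in> A j}"
  have one: "(1::nat) \<in> {1..m}" using r2 rm by simp
  have sH1: "add_subgroup H1" unfolding H1_def by (rule dg_sub)
  have "0 \<in> (\<lambda>h. a1 + h) ` H1 - A 1" using sg_zero[OF canon] unfolding H1_def .
  then obtain h0 where h0: "h0 \<in> H1" "0 = a1 + h0" and n0: "0 \<notin> A 1" by auto
  have a1H: "a1 \<in> H1" using sg_neg[OF sH1 h0(1)] h0(2) by (metis add.commute add_minus_cancel add.right_neutral)
  have A1H: "A 1 \<subseteq> H1"
  proof
    fix x assume "x \<in> A 1"
    hence "x - a1 \<in> H1" using a1 dg_gen unfolding H1_def by blast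
    from sg_add[OF sH1 this a1H] show "x \<in> H1" by simp
  qed
  have U1H: "u \<notin> H1" if "u \<in> U1" for u
  proof
    assume "u \<in> H1"
    hence "a1 - u \<in> H1" using sg_diff[OF sH1 a1H] by blast
    hence "u + (a1 - u) \<in> U1" using stab[OF disj bim one] that unfolding U1_def H1_def by blast
    hence "a1 \<in> U1" by simp
    thus False using a1 disj one unfolding U1_def by blast
  qed
  have XU: "X = A 1 \<union> U1"
  proof (rule set_eqI)
    fix x
    show "x \<in> X \<longleftrightarrow> x \<in> A 1 \<union> U1"
    proof
      assume "x \<in> X"
      then obtain j where j: "j \<in> {1..m}" "x \<in> A j" unfolding X_def by blast
      show "x \<in> A 1 \<union> U1"
      proof (cases "j = 1")
        case True thus ?thesis using j by simp
      next
        case False thus ?thesis using j unfolding U1_def by blast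
      qed
    next
      assume "x \<in> A 1 \<union> U1"
      thus "x \<in> X" using one unfolding X_def U1_def by blast
    qed
  qed
  have X0: "0 \<notin> X" using XU n0 U1H sg_zero[OF sH1] by blast
  have im: "i \<in> {1..m}" and nr: "\<not> i \<le> r" using iR r2 by auto
  define Hi where "Hi = diff_group (A i)"
  have sHi: "add_subgroup Hi" unfolding Hi_def by (rule dg_sub)
  obtain c where c: "c \<in> A i" using nonempty im by blast
  have Aic: "A i = (\<lambda>h. c + h) ` Hi"
    unfolding Hi_def by (rule full_coset[OF c]) (use label im nr in blast)
  have Xper: "x + g \<in> X" if "x \<in> X" "g \<in> Hi" for x g
  proof (cases "x \<in> A i")
    case True
    then obtain h where "h \<in> Hi" "x = c + h" using Aic by auto
    hence "x + g = c + (h + g)" "h + g \<in> Hi" using sg_add[OF sHi _ that(2)] by (auto simp: add.assoc)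
    hence "x + g \<in> A i" using Aic by auto
    thus ?thesis using im unfolding X_def by blast
  next
    case False
    obtain j where j: "j \<in> {1..m}" "x \<in> A j" using \<open>x \<in> X\<close> unfolding X_def by blast
    hence "j \<noteq> i" using False by auto
    hence "x \<in> {b. \<exists>j\<in>{1..m}. j \<noteq> i \<and> b \<in> A j}" using j by blast
    from stab[OF disj bim im _ this] that(2) show ?thesis unfolding X_def Hi_def by blast
  qed
  have "h \<in> (\<lambda>h. a1 + h) ` H1 - A 1" if h: "h \<in> Hi" for h
  proof -
    have hX: "h \<notin> X"
    proof
      assume "h \<in> X"
      from Xper[OF this sg_neg[OF sHi h]] X0 show False by simp
    qed
    have "a1 + h \<in> X" using Xper[OF _ h] a1 one unfolding X_def by blast
    moreover have "a1 + h \<notin> U1"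
    proof
      assume "a1 + h \<in> U1"
      hence "(a1 + h) + (- a1) \<in> U1" using stab[OF disj bim one] sg_neg[OF sH1 a1H]
        unfolding U1_def H1_def by blast
      thus False using hX XU by simp
    qed
    ultimately have "a1 + h \<in> H1" using XU A1H by blast
    hence hH: "h \<in> H1" using sg_diff[OF sH1 _ a1H] by fastforce
    hence "h - a1 \<in> H1" using sg_diff[OF sH1 _ a1H] by blast
    hence "h \<in> (\<lambda>h. a1 + h) ` H1" by (force intro: image_eqI[where x="h - a1"])
    moreover have "h \<notin> A 1" using hX XU by blast
    ultimately show ?thesis by blast
  qed
  thus "add_subgroup (diff_group (A i)) \<and>
           diff_group (A i) \<subseteq> (\<lambda>h. a1 + h) ` diff_group (A 1) - A 1"
    using sHi unfolding Hi_def H1_def by blast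
qed

end
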